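(* Let $G=(V,E)$ be a reaction network in $\mathbb{R}^n$ with deficiency zero that is not weakly reversible. Then for every choice of rate constants $\mathbf{k}\in\mathbb{R}^{|E|}_{>0}$ and every initial condition $\mathbf{x}_0\in\mathbb{R}^n_{>0}$ whose stoichiometric compatibility class $\mathcal{S}_{\mathbf{x}_0}$ is bounded, the solution $\mathbf{x}(t)$ of the mass-action system $(G,\mathbf{k})$ with $\mathbf{x}(0)=\mathbf{x}_0$ satisfies $\liminf_{t\to\infty}x_i(t)=0$ for some $1\le i\le n$; i.e., $(G,\mathbf{k})$ exhibits weak extinction in some species $X_i$.
   Context: A reaction network $G=(V,E)$ is a finite directed graph with vertex set $V\subset\mathbb{Z}^n_{\ge0}$, no self-loops, no isolated vertices, at most one edge per ordered pair; an edge $\mathbf{y}\to\mathbf{y}'$ is a reaction. Species $X_1,\dots,X_n$ correspond to the coordinates $x_1,\dots,x_n$. Linkage classes are the connected components of the underlying undirected graph; $G$ is weakly reversible if every reaction lies on a directed cycle. The stoichiometric subspace is $\mathcal{S}_G=\operatorname{span}\{\mathbf{y}'-\mathbf{y}:\mathbf{y}\to\mathbf{y}'\in E\}$ and the deficiency is $|V|-\ell-\dim\mathcal{S}_G$ with $\ell$ the number of linkage classes. The mass-action system $(G,\mathbf{k})$ with $\mathbf{k}\in\mathbb{R}^{|E|}_{>0}$ is $\dot{\mathbf{x}}=\sum_{\mathbf{y}\to\mathbf{y}'\in E}k_{\mathbf{y}\to\mathbf{y}'}\mathbf{x}^{\mathbf{y}}(\mathbf{y}'-\mathbf{y})$ on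 $\mathbb{R}^n_{>0}$, with $\mathbf{x}^{\mathbf{y}}=\prod_i x_i^{y_i}$; $\mathbb{R}^n_{>0}$ is forward invariant and solutions stay in the stoichiometric compatibility class $\mathcal{S}_{\mathbf{x}_0}=(\mathbf{x}_0+\mathcal{S}_G)\cap\mathbb{R}^n_{>0}$. The system exhibits weak extinction in $X_i$ if for some $\mathbf{x}_0\in\mathbb{R}^n_{>0}$ the solution satisfies $\liminf_{t\to\infty}x_i(t)=0$. *)

theory Defs
  imports "HOL-Analysis.Analysis" "HOL-Library.Liminf_Limsup"
begin

text \<open>Species are indexed by a finite type 'n (so n = CARD('n)).
  A reaction network is given by its finite set of reactions E; the vertex set
  is the set of endpoints of reactions (no isolated vertices).\<close>

type_synonym 'n complex = "nat ^ 'n"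
type_synonym 'n network = "('n complex \<times> 'n complex) set"

definition reaction_network :: "('n::finite) network \<Rightarrow> bool" where
  "reaction_network E \<longleftrightarrow> finite E \<and> (\<forall>(y, y') \<in> E. y \<noteq> y')"

definition vertices :: "('n::finite) network \<Rightarrow> 'n complex set" where
  "vertices E = fst ` E \<union> snd ` E"

definition cvec :: "'n complex \<Rightarrow> real ^ 'n" where
  "cvec y = (\<chi> i. real (y $ i))"

definition stoich_subspace :: "('n::finite) network \<Rightarrow> (real ^ 'n) set" where
  "stoich_subspace E = span {cvec y' - cvec y | y y'. (y, y') \<in> E}"

definition linkage_classes :: "('n::finite) network \<Rightarrow> 'n complex set set" where
  "linkage_classes E = vertices E // ((E \<union> E\<inverse>)\<^sup>*)"

definition deficiency :: "('n::finite) network \<Rightarrow> int" where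
  "deficiency E = int (card (vertices E)) - int (card (linkage_classes E))
                   - int (dim (stoich_subspace E))"

definition weakly_reversible :: "('n::finite) network \<Rightarrow> bool" where
  "weakly_reversible E \<longleftrightarrow> (\<forall>(y, y') \<in> E. (y', y) \<in> E\<^sup>*)"

definition monomial :: "real ^ ('n::finite) \<Rightarrow> 'n complex \<Rightarrow> real" where
  "monomial x y = (\<Prod>i\<in>UNIV. (x $ i) ^ (y $ i))"

definition mass_action :: "('n::finite) network \<Rightarrow> ('n complex \<times> 'n complex \<Rightarrow> real)
    \<Rightarrow> real ^ 'n \<Rightarrow> real ^ 'n" where
  "mass_action E k x = (\<Sum>(y, y') \<in> E. (k (y, y') * monomial x y) *\<^sub>R (cvec y' - cvec y))"

definition pos_orthant :: "(real ^ ('n::finite)) set" where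
  "pos_orthant = {x. \<forall>i. x $ i > 0}"

definition compat_class :: "('n::finite) network \<Rightarrow> real ^ 'n \<Rightarrow> (real ^ 'n) set" where
  "compat_class E x0 = ((\<lambda>v. x0 + v) ` stoich_subspace E) \<inter> pos_orthant"

definition is_solution :: "('n::finite) network \<Rightarrow> ('n complex \<times> 'n complex \<Rightarrow> real)
    \<Rightarrow> real ^ 'n \<Rightarrow> (real \<Rightarrow> real ^ 'n) \<Rightarrow> bool" where
  "is_solution E k x0 x \<longleftrightarrow> x 0 = x0 \<and>
     (\<forall>t \<ge> 0. x t \<in> pos_orthant \<and>
        (x has_vector_derivative mass_action E k (x t)) (at t within {0..}))"

end

theory Submission
  imports Defs
begin

lemma perp_exists:
  fixes S :: "'a::euclidean_space set"
  assumes "subspace S" "v \<notin> S"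
  shows "\<exists>z. (\<forall>s\<in>S. z \<bullet> s = 0) \<and> z \<bullet> v \<noteq> 0"
proof -
  have sS: "span S = S" using assms(1) by (simp add: span_eq_iff)
  have ps: "span S \<subset> span (insert v S)"
    using assms sS by (metis insertI1 span_base span_mono subset_insertI psubsetI)
  then obtain z where z: "z \<noteq> 0" "z \<in> span (insert v S)" "\<And>y. y \<in> span S \<Longrightarrow> orthogonal z y"
    using orthogonal_to_subspace_exists_gen[OF ps] by blast
  then obtain c where c: "z - c *\<^sub>R v \<in> span S" using span_breakdown_eq by blast
  have "z \<bullet> (z - c *\<^sub>R v) = 0" using z(3)[OF c] by (simp add: orthogonal_def)
  hence "z \<bullet> z = c * (z \<bullet> v)" by (simp add: inner_diff_right)
  moreover have "z \<bullet> z \<noteq> 0" using z(1) by simp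
  ultimately have "z \<bullet> v \<noteq> 0" by auto
  moreover have "\<forall>s\<in>S. z \<bullet> s = 0" using z(3) sS by (auto simp: orthogonal_def)
  ultimately show ?thesis by blast
qed

lemma equivR: "equiv UNIV ((E \<union> E\<inverse>)\<^sup>*)"
  unfolding equiv_def
  by (auto simp: refl_rtrancl trans_rtrancl sym_rtrancl sym_Un_converse)

lemma R_vertices:
  assumes "(a, b) \<in> (E \<union> E\<inverse>)\<^sup>*" "a \<in> vertices E"
  shows "b \<in> vertices E"
  using assms
proof (induction rule: rtrancl_induct)
  case (step b c) thus ?case by (force simp: vertices_def)
qed simp

lemma dim_bound:
  fixes E :: "'n::finite network" and g :: "'n complex \<Rightarrow> 'b::euclidean_space"
  assumes fin: "finite E"
  shows "dim {g y' - g y | y y'. (y, y') \<in> E} \<le> card (vertices E) - card (linkage_classes E)"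
proof -
  define R where "R = (E \<union> E\<inverse>)\<^sup>*"
  define V where "V = vertices E"
  have finV: "finite V" using fin by (simp add: V_def vertices_def)
  have eq: "equiv UNIV R" unfolding R_def by (rule equivR)
  define rep where "rep v = (SOME u. u \<in> R``{v})" for v
  have vrep: "(v, rep v) \<in> R" for v
  proof -
    have "v \<in> R``{v}" using eq by (auto simp: equiv_def refl_on_def)
    hence "rep v \<in> R``{v}" unfolding rep_def by (rule someI)
    thus ?thesis by simp
  qed
  have repeq: "rep a = rep b" if "(a, b) \<in> R" for a b
  proof -
    have "R``{a} = R``{b}" using eq that by (rule equiv_class_eq)
    thus ?thesis by (simp add: rep_def)
  qed
  have reprep: "rep (rep v) = rep v" for v using repeq[OF vrep[of v]] by simp
  define Reps where "Reps = rep ` V"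
  have RepsV: "Reps \<subseteq> V" unfolding Reps_def V_def using R_vertices vrep unfolding R_def by blast
  have "linkage_classes E = (\<lambda>v. R``{v}) ` V"
    by (simp add: linkage_classes_def quotient_def R_def V_def) blast
  also have "\<dots> = (\<lambda>u. R``{u}) ` Reps"
    unfolding Reps_def image_image using eq vrep by (metis (no_types, lifting) equiv_class_eq image_cong)
  finally have lc: "linkage_classes E = (\<lambda>u. R``{u}) ` Reps" .
  have "inj_on (\<lambda>u. R``{u}) Reps"
  proof (rule inj_onI)
    fix a b assume "a \<in> Reps" "b \<in> Reps" "R``{a} = R``{b}"
    then obtain a' b' where ab: "a = rep a'" "b = rep b'" by (auto simp: Reps_def)
    have "(a, b) \<in> R" using \<open>R``{a} = R``{b}\<close> eq
      by (metis UNIV_I eq_equiv_class_iff)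
    hence "rep a = rep b" by (rule repeq)
    thus "a = b" using ab reprep by simp
  qed
  hence cardlc: "card (linkage_classes E) = card Reps" by (simp add: lc card_image)
  define f where "f v = g v - g (rep v)" for v
  have sub: "{g y' - g y | y y'. (y, y') \<in> E} \<subseteq> span (f ` (V - Reps))"
  proof
    fix p assume "p \<in> {g y' - g y | y y'. (y, y') \<in> E}"
    then obtain y y' where p: "p = g y' - g y" "(y, y') \<in> E" by blast
    have yV: "y \<in> V" "y' \<in> V" using p(2) by (force simp: V_def vertices_def)+
    have "(y, y') \<in> R" using p(2) by (auto simp: R_def)
    hence "rep y = rep y'" by (rule repeq)
    hence p2: "p = f y' - f y" using p by (simp add: f_def)
    have fin: "f v \<in> span (f ` (V - Reps))" if "v \<in> V" for v
    proof (cases "v \<in> Reps")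
      case True
      then obtain u where "v = rep u" by (auto simp: Reps_def)
      hence "f v = 0" by (simp add: f_def reprep)
      thus ?thesis by (simp add: span_zero)
    next
      case False thus ?thesis using that by (simp add: span_base)
    qed
    show "p \<in> span (f ` (V - Reps))" using p2 fin yV by (simp add: span_diff)
  qed
  have "dim {g y' - g y | y y'. (y, y') \<in> E} \<le> card (f ` (V - Reps))"
    by (rule dim_le_card[OF sub]) (simp add: finV)
  also have "\<dots> \<le> card (V - Reps)" by (rule card_image_le) (simp add: finV)
  also have "\<dots> = card V - card Reps" using RepsV finV by (simp add: card_Diff_subset finite_subset)
  finally show ?thesis by (simp add: cardlc V_def)
qed

lemma functional_exists:
  fixes E :: "'n::finite network" and L :: "'n complex \<Rightarrow> real"
  assumes fin: "finite E" and def0: "deficiency E = 0"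
  shows "\<exists>w::real^'n. \<forall>(y, y')\<in>E. w \<bullet> (cvec y' - cvec y) = L y' - L y"
proof -
  define g2 where "g2 v = (cvec v, L v)" for v
  define G1 where "G1 = {cvec y' - cvec y | y y'. (y, y') \<in> E}"
  define G2 where "G2 = {g2 y' - g2 y | y y'. (y, y') \<in> E}"
  have S: "stoich_subspace E = span G1" by (simp add: stoich_subspace_def G1_def)
  have d2: "dim G2 \<le> card (vertices E) - card (linkage_classes E)"
    unfolding G2_def by (rule dim_bound[OF fin])
  have dS: "int (dim G1) = int (card (vertices E)) - int (card (linkage_classes E))"
    using def0 S by (simp add: deficiency_def dim_span)
  have fstG: "fst ` G2 = G1" unfolding G1_def G2_def g2_def by force
  have fstspan: "fst ` span G2 = span G1"
    using span_linear_image[of fst G2] fstG by (simp add: linear_fst)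
  have notin: "(0, 1) \<notin> span G2"
  proof
    assume e: "(0::real^'n, 1::real) \<in> span G2"
    have inS: "(u, 0) \<in> span G2" if uin: "u \<in> span G1" for u
    proof -
      obtain p where p: "p \<in> span G2" "fst p = u" using uin fstspan by force
      have "p - snd p *\<^sub>R (0, 1) \<in> span G2" using p e by (intro span_diff span_scale) auto
      moreover have "p - snd p *\<^sub>R (0, 1) = (u, 0)" using p by (cases p) simp
      ultimately show ?thesis by simp
    qed
    obtain B where B: "B \<subseteq> span G1" "independent B" "span G1 \<subseteq> span B" "card B = dim (span G1)"
      using basis_exists by blast
    have finB: "finite B" using B(2) by (rule independent_imp_finite)
    define B' where "B' = (\<lambda>u. (u, 0::real)) ` B"
    have linp: "linear (\<lambda>u::real^'n. (u, 0::real))" by (rule linearI) auto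
    have injp: "inj_on (\<lambda>u::real^'n. (u, 0::real)) X" for X by (simp add: inj_on_def)
    have indB': "independent B'" unfolding B'_def
      using linear_independent_injective_image[OF linp B(2) injp] .
    have spanB': "span B' \<subseteq> {p. snd p = 0}"
    proof (rule span_minimal)
      show "B' \<subseteq> {p. snd p = 0}" by (auto simp: B'_def)
      show "subspace {p::(real^'n) \<times> real. snd p = 0}" by (auto simp: subspace_def)
    qed
    have nin: "(0, 1) \<notin> span B'" using spanB' by auto
    have ind2: "independent (insert (0, 1) B')" using indB' nin by (simp add: independent_insertI)
    have sub2: "insert (0, 1) B' \<subseteq> span G2" using e inS B(1) by (auto simp: B'_def)
    have "card (insert (0, 1) B') \<le> dim (span G2)"
      by (rule independent_card_le_dim[OF sub2 ind2])
    moreover have "card (insert (0, 1) B') = card B + 1"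
    proof -
      have "(0, 1) \<notin> B'" using nin span_base by blast
      moreover have "finite B'" using finB by (simp add: B'_def)
      ultimately have "card (insert (0, 1) B') = Suc (card B')" by simp
      moreover have "card B' = card B" unfolding B'_def by (rule card_image[OF injp])
      ultimately show ?thesis by simp
    qed
    ultimately have "dim G1 + 1 \<le> dim G2" using B(4) by (simp add: dim_span)
    thus False using d2 dS by linarith
  qed
  obtain z where z: "\<forall>s\<in>span G2. z \<bullet> s = 0" "z \<bullet> (0, 1) \<noteq> 0"
    using perp_exists[OF subspace_span notin] by blast
  obtain w0 b where zb: "z = (w0, b)" by (cases z)
  have b: "b \<noteq> 0" using z(2) zb by simp
  show ?thesis
  proof (intro exI ballI, clarify)
    fix y y' assume "(y, y') \<in> E"
    hence "g2 y' - g2 y \<in> span G2" by (auto simp: G2_def intro!: span_base)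
    hence "z \<bullet> (g2 y' - g2 y) = 0" using z(1) by blast
    hence "w0 \<bullet> (cvec y' - cvec y) + b * (L y' - L y) = 0" using zb by (simp add: g2_def)
    thus "(- (1/b) *\<^sub>R w0) \<bullet> (cvec y' - cvec y) = L y' - L y" using b
      by (simp add: field_simps)
  qed
qed

lemma inner_deriv:
  assumes "is_solution E k x0 x" "t \<ge> 0"
  shows "((\<lambda>s. w \<bullet> x s) has_real_derivative (w \<bullet> mass_action E k (x t))) (at t within {0..})"
  using bounded_linear.has_vector_derivative[OF bounded_linear_inner_right, of x "mass_action E k (x t)" "at t within {0..}" w] assms
  by (simp add: is_solution_def has_real_derivative_iff_has_vector_derivative)

lemma inner_mass_action:
  "w \<bullet> mass_action E k xx = (\<Sum>r\<in>E. k r * monomial xx (fst r) * (w \<bullet> (cvec (snd r) - cvec (fst r))))"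
  by (simp add: mass_action_def inner_sum_right case_prod_unfold)

theorem theorem1p2:
  fixes E :: "'n::finite network"
    and k :: "'n complex \<times> 'n complex \<Rightarrow> real"
    and x0 :: "real ^ 'n"
    and x :: "real \<Rightarrow> real ^ 'n"
  assumes "reaction_network E"
    and "deficiency E = 0"
    and "\<not> weakly_reversible E"
    and "\<forall>r \<in> E. k r > 0"
    and "x0 \<in> pos_orthant"
    and "bounded (compat_class E x0)"
    and "is_solution E k x0 x"
  shows "\<exists>i. Liminf at_top (\<lambda>t. ereal (x t $ i)) = 0"
proof (rule ccontr)
  assume nz: "\<not> (\<exists>i. Liminf at_top (\<lambda>t. ereal (x t $ i)) = 0)"
  note sol = assms(7)[unfolded is_solution_def]
  have pos: "x t $ i > 0" if "t \<ge> 0" for t i using sol that by (auto simp: pos_orthant_def)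
  have x00: "x 0 = x0" using sol by simp
  have finE: "finite E" using assms(1) by (simp add: reaction_network_def)
  obtain y0 y0' where r0: "(y0, y0') \<in> E" "(y0', y0) \<notin> E\<^sup>*"
    using assms(3) by (auto simp: weakly_reversible_def)
  define L where "L v = (if (y0', v) \<in> E\<^sup>* then 1 else 0::real)" for v
  obtain w where w: "\<forall>(y, y')\<in>E. w \<bullet> (cvec y' - cvec y) = L y' - L y"
    using functional_exists[OF finE assms(2)] by blast
  have wnn: "w \<bullet> (cvec y' - cvec y) \<ge> 0" if "(y, y') \<in> E" for y y'
  proof -
    have "w \<bullet> (cvec y' - cvec y) = L y' - L y" using w that by blast
    moreover have "L y \<le> L y'" using that by (auto simp: L_def intro: rtrancl_into_rtrancl)
    ultimately show ?thesis by simp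
  qed
  have w0: "w \<bullet> (cvec y0' - cvec y0) = 1" using w r0 by (auto simp: L_def)
  define S where "S = stoich_subspace E"
  have subS: "subspace S" by (simp add: S_def stoich_subspace_def subspace_span)
  have genS: "cvec y' - cvec y \<in> S" if "(y, y') \<in> E" for y y'
    using that by (auto simp: S_def stoich_subspace_def intro!: span_base)
  have inS: "x t - x0 \<in> S" if t0: "t \<ge> 0" for t
  proof (rule ccontr)
    assume "x t - x0 \<notin> S"
    then obtain z where z: "\<forall>s\<in>S. z \<bullet> s = 0" "z \<bullet> (x t - x0) \<noteq> 0"
      using perp_exists[OF subS] by blast
    have "\<exists>c. \<forall>s\<in>{0::real..}. z \<bullet> x s = c"
    proof (rule has_field_derivative_zero_constant)
      show "convex {0::real..}" by (simp add: convex_real_interval)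
      fix s :: real assume "s \<in> {0..}"
      hence "((\<lambda>s. z \<bullet> x s) has_real_derivative (z \<bullet> mass_action E k (x s))) (at s within {0..})"
        using inner_deriv[OF assms(7)] by simp
      moreover have "z \<bullet> mass_action E k (x s) = 0" unfolding inner_mass_action
        using z(1) genS by (auto intro!: sum.neutral)
      ultimately show "((\<lambda>s. z \<bullet> x s) has_real_derivative 0) (at s within {0..})" by simp
    qed
    then obtain c where "\<forall>s\<in>{0::real..}. z \<bullet> x s = c" by blast
    hence "z \<bullet> x t = c" "z \<bullet> x 0 = c" using t0 by auto
    hence "z \<bullet> x t = z \<bullet> x0" using x00 by simp
    thus False using z(2) by (simp add: inner_diff_right)
  qed
  obtain B where B: "\<forall>p\<in>compat_class E x0. norm p \<le> B" using assms(6) bounded_iff by blast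
  have incc: "x t \<in> compat_class E x0" if "t \<ge> 0" for t
  proof -
    have "x t = x0 + (x t - x0)" by simp
    hence "x t \<in> (\<lambda>v. x0 + v) ` stoich_subspace E" using inS[OF that] unfolding S_def by blast
    thus ?thesis using sol that by (simp add: compat_class_def)
  qed
  have hb: "\<bar>w \<bullet> x t\<bar> \<le> norm w * B" if "t \<ge> 0" for t
  proof -
    have "\<bar>w \<bullet> x t\<bar> \<le> norm w * norm (x t)" by (rule Cauchy_Schwarz_ineq2)
    also have "\<dots> \<le> norm w * B" using B incc[OF that] by (simp add: mult_left_mono)
    finally show ?thesis .
  qed
  have ex: "\<exists>c>0. eventually (\<lambda>t. x t $ i > c) at_top" for i
  proof -
    have "eventually (\<lambda>t. ereal 0 \<le> ereal (x t $ i)) at_top"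
      using eventually_ge_at_top[of "0::real"] by eventually_elim (simp add: pos less_imp_le)
    hence "ereal 0 \<le> Liminf at_top (\<lambda>t. ereal (x t $ i))" by (rule Liminf_bounded)
    moreover have "Liminf at_top (\<lambda>t. ereal (x t $ i)) \<noteq> 0" using nz by blast
    ultimately have "ereal 0 < Liminf at_top (\<lambda>t. ereal (x t $ i))" by (metis order_le_less zero_ereal_def)
    then obtain c where c: "ereal 0 < ereal c" "ereal c < Liminf at_top (\<lambda>t. ereal (x t $ i))"
      using ereal_dense2 by blast
    have "eventually (\<lambda>t. ereal (x t $ i) > ereal c) at_top" using less_LiminfD[OF c(2)] .
    thus ?thesis using c(1) by (intro exI[of _ c]) simp
  qed
  have "\<forall>i. \<exists>c. c > 0 \<and> eventually (\<lambda>t. x t $ i > c) at_top" using ex by blast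
  from choice[OF this] obtain c where c0: "\<forall>i. c i > 0 \<and> eventually (\<lambda>t. x t $ i > c i) at_top" by blast
  have c: "\<And>i. c i > 0" "\<And>i. eventually (\<lambda>t. x t $ i > c i) at_top" using c0 by auto
  have "eventually (\<lambda>t. \<forall>i. x t $ i > c i) at_top" by (intro eventually_all_finite c(2))
  then obtain T where T: "\<And>t i. t \<ge> T \<Longrightarrow> x t $ i > c i" by (auto simp: eventually_at_top_linorder)
  define T1 where "T1 = max T 1"
  define m where "m = (\<Prod>i\<in>UNIV. c i ^ (y0 $ i))"
  have mpos: "m > 0" unfolding m_def using c(1) by (simp add: prod_pos)
  have k0: "k (y0, y0') > 0" using assms(4) r0 by auto
  define a where "a = k (y0, y0') * m"
  have apos: "a > 0" using mpos k0 by (simp add: a_def)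
  have dge: "w \<bullet> mass_action E k (x t) \<ge> a" if tT: "t \<ge> T1" for t
  proof -
    have t0: "t \<ge> 0" using tT by (simp add: T1_def)
    have monnn: "monomial (x t) y \<ge> 0" for y unfolding monomial_def
      using pos[OF t0] by (simp add: prod_nonneg less_imp_le)
    have mon0: "monomial (x t) y0 \<ge> m" unfolding monomial_def m_def
    proof (rule prod_mono, intro conjI)
      fix i show "0 \<le> c i ^ (y0 $ i)" using c(1) by (simp add: less_imp_le)
      show "c i ^ (y0 $ i) \<le> x t $ i ^ (y0 $ i)" using c(1)[of i] T[of t i] tT
        by (intro power_mono) (auto simp: T1_def)
    qed
    let ?f = "\<lambda>r. k r * monomial (x t) (fst r) * (w \<bullet> (cvec (snd r) - cvec (fst r)))"
    have "?f (y0, y0') \<le> sum ?f E"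
    proof (rule member_le_sum[OF r0(1)])
      fix r assume "r \<in> E - {(y0, y0')}"
      hence "k r > 0" "w \<bullet> (cvec (snd r) - cvec (fst r)) \<ge> 0" using assms(4) wnn[of "fst r" "snd r"] by auto
      thus "0 \<le> ?f r" using monnn by simp
    qed (rule finE)
    moreover have "?f (y0, y0') = k (y0, y0') * monomial (x t) y0" using w0 by simp
    moreover have "k (y0, y0') * monomial (x t) y0 \<ge> a" unfolding a_def using k0 mon0 by simp
    ultimately show ?thesis unfolding inner_mass_action by linarith
  qed
  define q where "q s = w \<bullet> x s - a * s" for s
  have qmono: "q T1 \<le> q t" if "t \<ge> T1" for t
  proof (rule DERIV_nonneg_imp_increasing_open[OF that])
    fix s assume s: "T1 < s" "s < t"
    hence s0: "s > 0" by (simp add: T1_def)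
    have "((\<lambda>s. w \<bullet> x s) has_real_derivative (w \<bullet> mass_action E k (x s))) (at s within {0<..})"
      by (rule has_field_derivative_subset[OF inner_deriv[OF assms(7) less_imp_le[OF s0]]]) auto
    moreover have "at s within {0<..} = at s" using s0 by (intro at_within_open) auto
    ultimately have "((\<lambda>s. w \<bullet> x s) has_real_derivative (w \<bullet> mass_action E k (x s))) (at s)"
      by simp
    hence "(q has_real_derivative (w \<bullet> mass_action E k (x s) - a)) (at s)"
      unfolding q_def using DERIV_cmult_Id[of a s UNIV] by (rule DERIV_diff)
    moreover have "w \<bullet> mass_action E k (x s) - a \<ge> 0" using dge[of s] s by simp
    ultimately show "\<exists>y. (q has_real_derivative y) (at s) \<and> 0 \<le> y" by blast
  next
    show "continuous_on {T1..t} q"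
      unfolding continuous_on_eq_continuous_within
    proof
      fix s assume s: "s \<in> {T1..t}"
      hence s0: "s \<ge> 0" by (simp add: T1_def)
      have "continuous (at s within {0..}) (\<lambda>s. w \<bullet> x s)"
        using inner_deriv[OF assms(7) s0] by (rule DERIV_continuous)
      hence "continuous (at s within {T1..t}) (\<lambda>s. w \<bullet> x s)"
        by (rule continuous_within_subset) (auto simp: T1_def)
      moreover have "continuous (at s within {T1..t}) (\<lambda>s. a * s)" by (intro continuous_intros)
      ultimately show "continuous (at s within {T1..t}) q" unfolding q_def
        by (rule continuous_diff)
    qed
  qed
  have "norm (x 0) \<le> B" using B incc[of 0] by simp
  hence Bnn: "B \<ge> 0" by (rule order_trans[OF norm_ge_zero])
  define t where "t = T1 + (2 * norm w * B + 1) / a"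
  have tT: "t \<ge> T1" unfolding t_def using apos Bnn by simp
  have T10: "T1 \<ge> 0" by (simp add: T1_def)
  have "q T1 \<le> q t" by (rule qmono[OF tT])
  hence "w \<bullet> x t \<ge> w \<bullet> x T1 + a * (t - T1)" by (simp add: q_def algebra_simps)
  moreover have "a * (t - T1) = 2 * norm w * B + 1" unfolding t_def using apos by simp
  moreover have "\<bar>w \<bullet> x T1\<bar> \<le> norm w * B" by (rule hb[OF T10])
  moreover have "\<bar>w \<bullet> x t\<bar> \<le> norm w * B" using hb tT T10 by simp
  ultimately show False by linarith
qed

end
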